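(* Let $(X,\mathcal R,\mu)$ be a measure space, i.e. $X$ is a set, $\mathcal R$ is a covering ring of $X$ and $\mu:\mathcal R\to\mathbf K$ is a measure. Then there exist a Hausdorff zero-dimensional space $(Y,\tau_{\mathcal G})$, whose topology $\tau_{\mathcal G}$ has as a base a covering ring $\mathcal G$ of $Y$ with $\mathcal G=\pi(\mathcal R)$, and a quotient mapping $\pi:X\to Y$, such that $\nu:=\pi(\mu)$ is a measure on $(Y,\mathcal G)$, i.e. $(Y,\mathcal G,\nu)$ is a measure space.
   Context: $\mathbf K$ is a field with a nontrivial non-Archimedean valuation $|\cdot|$, $\mathbf K\supset\mathbf Q_p$, complete as an ultrametric space. A covering ring $\mathcal R$ of a set $X$ is a family of subsets of $X$ closed under finite unions, finite intersections and set differences, whose union is $X$. A subfamily $\mathcal S\subset\mathcal R$ is shrinking if for all $A,B\in\mathcal S$ there is $C\in\mathcal S$ with $C\subset A\cap B$; for $f:\mathcal R\to\mathbf K$, $\lim_{A\in\mathcal S}f(A)=0$ means that for each $\epsilon>0$ there is $B\in\mathcal S$ with $|f(A)|\le\epsilon$ for all $A\in\mathcal S$ with $A\subset B$. A measure $\mu:\mathcal R\to\mathbf K$ is a map such that (i) $\mu(A\cup B)=\mu(A)+\mu(B)$ for disjoint $A,B\in\mathcal R$; (ii) $\|A\|_\mu:=\sup\{|\mu(B)|:B\in\mathcal R,B\subset A\}<\infty$ for each $A\in\mathcal R$; (iii) $\lim_{A\in\mathcal S}\mu(A)=0$ for every shrinking $\mathcal S\subset\mathcal R$ with $\bigcap_{S\in\mathcal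 S}S=\emptyset$. A covering ring $\mathcal R$ defines on $X$ the topology $\tau_{\mathcal R}$ with base $\mathcal R$ (all elements of $\mathcal R$ are clopen); a space is zero-dimensional if it has a base of clopen sets. If $\pi:X\to Y$ satisfies $\pi^{-1}(\mathcal G)\subset\mathcal R$, the image measure is $\pi(\mu)(A):=\mu(\pi^{-1}(A))$ for $A\in\mathcal G$. *)

theory Defs
  imports "HOL-Analysis.Analysis"
begin

text \<open>A complete field with a nontrivial non-Archimedean absolute value, containing Q_p
  (char 0, complete, and the valuation restricted to Q is p-adic, i.e. |p| < 1 for a prime p).\<close>
definition nonarch_complete_field :: "('k::field_char_0 \<Rightarrow> real) \<Rightarrow> bool" where
  "nonarch_complete_field v \<longleftrightarrow>
     (\<forall>x. 0 \<le> v x) \<and> (\<forall>x. v x = 0 \<longleftrightarrow> x = 0) \<and>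
     (\<forall>x y. v (x * y) = v x * v y) \<and>
     (\<forall>x y. v (x + y) \<le> max (v x) (v y)) \<and>
     (\<exists>x. v x \<noteq> 0 \<and> v x \<noteq> 1) \<and>
     (\<forall>s::nat \<Rightarrow> 'k. (\<forall>e>0. \<exists>N. \<forall>m\<ge>N. \<forall>n\<ge>N. v (s m - s n) < e)
          \<longrightarrow> (\<exists>l. \<forall>e>0. \<exists>N. \<forall>n\<ge>N. v (s n - l) < e)) \<and>
     (\<exists>p::nat. prime p \<and> v (of_nat p) < 1)"

definition covering_ring :: "'a set \<Rightarrow> 'a set set \<Rightarrow> bool" where
  "covering_ring X R \<longleftrightarrow>
     R \<subseteq> Pow X \<and> \<Union>R = X \<and>
     (\<forall>A\<in>R. \<forall>B\<in>R. A \<union> B \<in> R \<and> A \<inter> B \<in> R \<and> A - B \<in> R)"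

definition shrinking :: "'a set set \<Rightarrow> bool" where
  "shrinking S \<longleftrightarrow> (\<forall>A\<in>S. \<forall>B\<in>S. \<exists>C\<in>S. C \<subseteq> A \<inter> B)"

definition lim_zero_along :: "('k \<Rightarrow> real) \<Rightarrow> 'a set set \<Rightarrow> ('a set \<Rightarrow> 'k) \<Rightarrow> bool" where
  "lim_zero_along v S f \<longleftrightarrow>
     (\<forall>e>0. \<exists>B\<in>S. \<forall>A\<in>S. A \<subseteq> B \<longrightarrow> v (f A) \<le> e)"

definition is_measure ::
  "('k::field \<Rightarrow> real) \<Rightarrow> 'a set \<Rightarrow> 'a set set \<Rightarrow> ('a set \<Rightarrow> 'k) \<Rightarrow> bool" where
  "is_measure v X R \<mu> \<longleftrightarrow>
     (\<forall>A\<in>R. \<forall>B\<in>R. A \<inter> B = {} \<longrightarrow> \<mu> (A \<union> B) = \<mu> A + \<mu> B) \<and>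
     (\<forall>A\<in>R. bdd_above ((\<lambda>B. v (\<mu> B)) ` {B\<in>R. B \<subseteq> A})) \<and>
     (\<forall>S. S \<subseteq> R \<and> shrinking S \<and> \<Inter>S = {} \<longrightarrow> lim_zero_along v S \<mu>)"

abbreviation ring_topology :: "'a set set \<Rightarrow> 'a topology" where
  "ring_topology R \<equiv> topology_generated_by R"

definition image_measure :: "'a set \<Rightarrow> ('a \<Rightarrow> 'b) \<Rightarrow> ('a set \<Rightarrow> 'k) \<Rightarrow> 'b set \<Rightarrow> 'k" where
  "image_measure X \<pi> \<mu> A = \<mu> {x\<in>X. \<pi> x \<in> A}"

end

theory Submission
  imports Defs
begin

lemma union_refine:
  fixes K :: "'a set set" and f :: "'a set \<Rightarrow> 'a set set"
  assumes fk: "\<And>k. k\<in>K \<Longrightarrow> \<Union>(f k) = k"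
  shows "\<Union>K = \<Union>(\<Union>(f ` K))"
proof (rule set_eqI)
  fix x show "x \<in> \<Union>K \<longleftrightarrow> x \<in> \<Union>(\<Union>(f ` K))"
  proof
    assume "x \<in> \<Union>K" then obtain k where "k\<in>K" "x\<in>k" by blast
    then have "x \<in> \<Union>(f k)" using fk by simp
    thus "x \<in> \<Union>(\<Union>(f ` K))" using \<open>k\<in>K\<close> by blast
  next
    assume "x \<in> \<Union>(\<Union>(f ` K))" then obtain k where "k\<in>K" "x\<in>\<Union>(f k)" by blast
    thus "x \<in> \<Union>K" using fk by blast
  qed
qed

lemma gen_top_base:
  assumes "covering_ring Z S"
  shows "openin (topology_generated_by S) U \<longleftrightarrow> (\<exists>F\<subseteq>S. U = \<Union>F)"
proof
  assume "openin (topology_generated_by S) U"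
  hence "generate_topology_on S U" by (simp add: openin_topology_generated_by_iff)
  thus "\<exists>F\<subseteq>S. U = \<Union>F"
  proof (induction rule: generate_topology_on.induct)
    case Empty
    then show ?case by auto
  next
    case (Int a b)
    then obtain F1 F2 where F: "F1 \<subseteq> S" "a = \<Union>F1" "F2 \<subseteq> S" "b = \<Union>F2" by blast
    let ?F = "{x \<inter> y | x y. x \<in> F1 \<and> y \<in> F2}"
    have "?F \<subseteq> S" using F assms unfolding covering_ring_def by blast
    moreover have "a \<inter> b = \<Union>?F" using F by blast
    ultimately show ?case by blast
  next
    case (UN K)
    then have "\<forall>k\<in>K. \<exists>F\<subseteq>S. k = \<Union>F" by blast
    then obtain f where f: "\<And>k. k\<in>K \<Longrightarrow> f k \<subseteq> S \<and> k = \<Union>(f k)" by metis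
    have "\<Union>(f ` K) \<subseteq> S" using f by blast
    moreover have "\<Union>K = \<Union>(\<Union>(f ` K))" by (rule union_refine) (use f in auto)
    ultimately show ?case by blast
  next
    case (Basis s)
    then show ?case by (intro exI[of _ "{s}"]) auto
  qed
next
  assume "\<exists>F\<subseteq>S. U = \<Union>F"
  then obtain F where "F \<subseteq> S" "U = \<Union>F" by blast
  thus "openin (topology_generated_by S) U"
    unfolding openin_topology_generated_by_iff
    by (blast intro: generate_topology_on.UN generate_topology_on.Basis)
qed

lemma gen_top_closed:
  assumes "covering_ring Z S" "B \<in> S"
  shows "closedin (topology_generated_by S) B"
proof -
  have "topspace (topology_generated_by S) - B = \<Union>((\<lambda>C. C - B) ` S)" by auto
  moreover have "(\<lambda>C. C - B) ` S \<subseteq> S" using assms unfolding covering_ring_def by blast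
  ultimately have "openin (topology_generated_by S) (topspace (topology_generated_by S) - B)"
    using gen_top_base[OF assms(1)] by metis
  moreover have "B \<subseteq> topspace (topology_generated_by S)" using assms by auto
  ultimately show ?thesis by (simp add: closedin_def)
qed

theorem proposition2p6:
  fixes v :: "'k::field_char_0 \<Rightarrow> real"
    and X :: "'a set" and R :: "'a set set" and \<mu> :: "'a set \<Rightarrow> 'k"
  assumes "nonarch_complete_field v"
    and "covering_ring X R"
    and "is_measure v X R \<mu>"
  shows "\<exists>(Y :: 'a set set) (G :: 'a set set set) (\<pi> :: 'a \<Rightarrow> 'a set).
           covering_ring Y G \<and>
           G = (\<lambda>A. \<pi> ` A) ` R \<and>
           (\<forall>U. openin (ring_topology G) U \<longleftrightarrow> (\<exists>F\<subseteq>G. U = \<Union>F)) \<and>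
           Hausdorff_space (ring_topology G) \<and>
           ring_topology G dim_le 0 \<and>
           quotient_map (ring_topology R) (ring_topology G) \<pi> \<and>
           (\<forall>A\<in>G. {x\<in>X. \<pi> x \<in> A} \<in> R) \<and>
           is_measure v Y G (image_measure X \<pi> \<mu>)"
proof -
  note cr = assms(2)[unfolded covering_ring_def]
  define \<pi> where "\<pi> x = {y\<in>X. \<forall>A\<in>R. x\<in>A \<longleftrightarrow> y\<in>A}" for x
  define Y where "Y = \<pi> ` X"
  define G where "G = (\<lambda>A. \<pi> ` A) ` R"
  define P where "P B = {x\<in>X. \<pi> x \<in> B}" for B
  have self: "x \<in> \<pi> x" if "x \<in> X" for x using that unfolding \<pi>_def by auto
  have eq: "\<pi> x = \<pi> y \<longleftrightarrow> (\<forall>A\<in>R. x\<in>A \<longleftrightarrow> y\<in>A)" if "x \<in> X" "y \<in> X" for x y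
  proof
    assume "\<pi> x = \<pi> y"
    then have "x \<in> \<pi> y" using self[OF that(1)] by simp
    thus "\<forall>A\<in>R. x\<in>A \<longleftrightarrow> y\<in>A" unfolding \<pi>_def by auto
  next
    assume "\<forall>A\<in>R. x\<in>A \<longleftrightarrow> y\<in>A"
    thus "\<pi> x = \<pi> y" unfolding \<pi>_def by auto
  qed
  have XR: "A \<subseteq> X" if "A \<in> R" for A using cr that by blast
  have mem: "\<pi> x \<in> \<pi> ` A \<longleftrightarrow> x \<in> A" if "A \<in> R" "x \<in> X" for A x
  proof
    assume "\<pi> x \<in> \<pi> ` A"
    then obtain a where "a \<in> A" "\<pi> x = \<pi> a" by auto
    thus "x \<in> A" using eq[OF that(2), of a] XR[OF that(1)] that by auto
  qed auto
  have PA: "P (\<pi> ` A) = A" if "A \<in> R" for A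
    using mem[OF that] XR[OF that] unfolding P_def by auto
  have imgP: "\<pi> ` (P B) = B" if "B \<in> G" for B
    using that PA unfolding G_def by auto
  have img_int: "\<pi> ` A \<inter> \<pi> ` B = \<pi> ` (A \<inter> B)" if "A \<in> R" "B \<in> R" for A B
    using mem that XR by blast
  have img_diff: "\<pi> ` A - \<pi> ` B = \<pi> ` (A - B)" if "A \<in> R" "B \<in> R" for A B
    using mem that XR by blast
  have img_sub: "\<pi> ` A \<subseteq> \<pi> ` B \<longleftrightarrow> A \<subseteq> B" if "A \<in> R" "B \<in> R" for A B
    using mem that XR by blast
  have crG: "covering_ring Y G"
    unfolding covering_ring_def
  proof (intro conjI ballI)
    show "G \<subseteq> Pow Y" using XR unfolding G_def Y_def by blast
    show "\<Union>G = Y" using cr unfolding G_def Y_def by blast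
  next
    fix A' B' assume "A' \<in> G" "B' \<in> G"
    then obtain A B where AB: "A \<in> R" "B \<in> R" "A' = \<pi> ` A" "B' = \<pi> ` B" unfolding G_def by blast
    show "A' \<union> B' \<in> G" using AB cr unfolding G_def by (simp add: image_Un[symmetric])
    show "A' \<inter> B' \<in> G" using AB cr img_int unfolding G_def by auto
    show "A' - B' \<in> G" using AB cr img_diff unfolding G_def by auto
  qed
  have topG: "topspace (ring_topology G) = Y" using crG unfolding covering_ring_def by simp
  have topR: "topspace (ring_topology R) = X" using cr by simp
  have openG: "\<forall>U. openin (ring_topology G) U \<longleftrightarrow> (\<exists>F\<subseteq>G. U = \<Union>F)"
    using gen_top_base[OF crG] by blast
  have openR: "\<And>U. openin (ring_topology R) U \<longleftrightarrow> (\<exists>F\<subseteq>R. U = \<Union>F)"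
    using gen_top_base[OF assms(2)] by blast
  have haus: "Hausdorff_space (ring_topology G)"
    unfolding Hausdorff_space_def topG
  proof (intro allI impI)
    fix p q assume pq: "p \<in> Y \<and> q \<in> Y \<and> p \<noteq> q"
    then obtain x y where xy: "x \<in> X" "y \<in> X" "p = \<pi> x" "q = \<pi> y" unfolding Y_def by blast
    then obtain A where A: "A \<in> R" "\<not> (x \<in> A \<longleftrightarrow> y \<in> A)" using eq pq by blast
    obtain Bx where Bx: "Bx \<in> R" "x \<in> Bx" using cr xy by blast
    obtain By where By: "By \<in> R" "y \<in> By" using cr xy by blast
    have op: "openin (ring_topology G) (\<pi> ` C)" if "C \<in> R" for C
      using openG that unfolding G_def by (metis Sup_insert ccpo_Sup_singleton empty_subsetI image_eqI insert_subset)
    show "\<exists>U V. openin (ring_topology G) U \<and> openin (ring_topology G) V \<and> p \<in> U \<and> q \<in> V \<and> disjnt U V"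
    proof (cases "x \<in> A")
      case True
      then have "y \<notin> A" using A by blast
      have "By - A \<in> R" using cr A By by blast
      moreover have "disjnt (\<pi> ` A) (\<pi> ` (By - A))"
        using img_int[OF A(1) \<open>By - A \<in> R\<close>] by (simp add: disjnt_def)
      ultimately show ?thesis using op A True \<open>y \<notin> A\<close> By xy by blast
    next
      case False
      then have "y \<in> A" using A by blast
      have "Bx - A \<in> R" using cr A Bx by blast
      moreover have "disjnt (\<pi> ` (Bx - A)) (\<pi> ` A)"
        using img_int[OF \<open>Bx - A \<in> R\<close> A(1)] by (auto simp add: disjnt_def)
      ultimately show ?thesis using op A False \<open>y \<in> A\<close> Bx xy by blast
    qed
  qed
  have dim: "ring_topology G dim_le 0"
    unfolding dimension_le_0_neighbourhood_base_of_clopen neighbourhood_base_of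
  proof (intro allI impI)
    fix W p assume "openin (ring_topology G) W \<and> p \<in> W"
    then obtain F where F: "F \<subseteq> G" "W = \<Union>F" "p \<in> W" using openG by blast
    then obtain B where B: "B \<in> G" "p \<in> B" "B \<subseteq> W" by blast
    have "openin (ring_topology G) B" using openG B by (metis Sup_insert ccpo_Sup_singleton empty_subsetI insert_subset)
    moreover have "closedin (ring_topology G) B" using gen_top_closed[OF crG B(1)] .
    ultimately show "\<exists>U V. openin (ring_topology G) U \<and> (closedin (ring_topology G) V \<and> openin (ring_topology G) V) \<and> p \<in> U \<and> U \<subseteq> V \<and> V \<subseteq> W"
      using B by blast
  qed
  have quot: "quotient_map (ring_topology R) (ring_topology G) \<pi>"
    unfolding quotient_map_def topG topR
  proof (intro conjI allI impI)
    show "\<pi> ` X = Y" by (simp add: Y_def)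
  next
    fix U assume UY: "U \<subseteq> Y"
    show "openin (ring_topology R) {x \<in> X. \<pi> x \<in> U} = openin (ring_topology G) U"
    proof
      assume "openin (ring_topology R) {x \<in> X. \<pi> x \<in> U}"
      then obtain F where F: "F \<subseteq> R" "{x \<in> X. \<pi> x \<in> U} = \<Union>F" using openR by blast
      have U0: "U = \<pi> ` {x \<in> X. \<pi> x \<in> U}" using UY unfolding Y_def by blast
      have U1: "\<pi> ` {x \<in> X. \<pi> x \<in> U} = \<Union>((\<lambda>A. \<pi> ` A) ` F)" using F(2) by auto
      have "(\<lambda>A. \<pi> ` A) ` F \<subseteq> G" using F(1) unfolding G_def by blast
      hence "\<exists>F'\<subseteq>G. U = \<Union>F'" using U0 U1 by metis
      thus "openin (ring_topology G) U" using openG by simp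
    next
      assume "openin (ring_topology G) U"
      then obtain F where F: "F \<subseteq> G" "U = \<Union>F" using openG by blast
      have "{x \<in> X. \<pi> x \<in> U} = \<Union>(P ` F)" using F unfolding P_def by auto
      moreover have "P ` F \<subseteq> R" using F PA unfolding G_def by auto
      ultimately have "\<exists>F'\<subseteq>R. {x \<in> X. \<pi> x \<in> U} = \<Union>F'" by metis
      thus "openin (ring_topology R) {x \<in> X. \<pi> x \<in> U}" using openR by simp
    qed
  qed
  have preR: "\<forall>A\<in>G. {x\<in>X. \<pi> x \<in> A} \<in> R"
    using PA unfolding G_def P_def[symmetric] by auto
  have M1: "\<And>A B. A\<in>R \<Longrightarrow> B\<in>R \<Longrightarrow> A \<inter> B = {} \<Longrightarrow> \<mu> (A \<union> B) = \<mu> A + \<mu> B"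
    using assms(3) unfolding is_measure_def by blast
  have M2: "\<And>A. A\<in>R \<Longrightarrow> bdd_above ((\<lambda>B. v (\<mu> B)) ` {B\<in>R. B \<subseteq> A})"
    using assms(3) unfolding is_measure_def by simp
  have M3: "\<And>S. S \<subseteq> R \<Longrightarrow> shrinking S \<Longrightarrow> \<Inter>S = {} \<Longrightarrow> lim_zero_along v S \<mu>"
    using assms(3) unfolding is_measure_def by simp
  have nu: "image_measure X \<pi> \<mu> B = \<mu> (P B)" for B by (simp add: image_measure_def P_def)
  have Pmono: "P a \<subseteq> P b" if "a \<subseteq> b" for a b using that unfolding P_def by auto
  have meas: "is_measure v Y G (image_measure X \<pi> \<mu>)"
    unfolding is_measure_def
  proof (intro conjI ballI allI impI)
    fix A' B' assume "A' \<in> G" "B' \<in> G" "A' \<inter> B' = {}"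
    then obtain A B where AB: "A \<in> R" "B \<in> R" "A' = \<pi> ` A" "B' = \<pi> ` B" "A' \<inter> B' = {}"
      unfolding G_def by blast
    have d: "A \<inter> B = {}" using img_int[OF AB(1,2)] AB(3,4,5) by (metis image_is_empty)
    have u: "A \<union> B \<in> R" using cr AB by blast
    have "image_measure X \<pi> \<mu> (A' \<union> B') = \<mu> (A \<union> B)"
      using nu PA[OF u] AB by (simp add: image_Un)
    also have "\<dots> = \<mu> A + \<mu> B" using M1[OF AB(1,2) d] .
    finally show "image_measure X \<pi> \<mu> (A' \<union> B') = image_measure X \<pi> \<mu> A' + image_measure X \<pi> \<mu> B'"
      using nu PA AB by simp
  next
    fix A' assume "A' \<in> G"
    then obtain A where A: "A \<in> R" "A' = \<pi> ` A" unfolding G_def by blast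
    have "(\<lambda>B. v (image_measure X \<pi> \<mu> B)) ` {B \<in> G. B \<subseteq> A'} = (\<lambda>B. v (\<mu> B)) ` {B \<in> R. B \<subseteq> A}"
    proof (intro equalityI subsetI)
      fix t assume "t \<in> (\<lambda>B. v (image_measure X \<pi> \<mu> B)) ` {B \<in> G. B \<subseteq> A'}"
      then obtain B where "B \<in> R" "\<pi> ` B \<subseteq> \<pi> ` A" "t = v (image_measure X \<pi> \<mu> (\<pi> ` B))"
        using A unfolding G_def by blast
      thus "t \<in> (\<lambda>B. v (\<mu> B)) ` {B \<in> R. B \<subseteq> A}" using img_sub A nu PA by auto
    next
      fix t assume "t \<in> (\<lambda>B. v (\<mu> B)) ` {B \<in> R. B \<subseteq> A}"
      then obtain B where B: "B \<in> R" "B \<subseteq> A" "t = v (\<mu> B)" by blast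
      then have "\<pi> ` B \<in> {B \<in> G. B \<subseteq> A'}" using A unfolding G_def by blast
      moreover have "t = v (image_measure X \<pi> \<mu> (\<pi> ` B))" using B nu PA by simp
      ultimately show "t \<in> (\<lambda>B. v (image_measure X \<pi> \<mu> B)) ` {B \<in> G. B \<subseteq> A'}" by blast
    qed
    thus "bdd_above ((\<lambda>B. v (image_measure X \<pi> \<mu> B)) ` {B \<in> G. B \<subseteq> A'})"
      using M2[OF A(1)] by simp
  next
    fix S' assume S': "S' \<subseteq> G \<and> shrinking S' \<and> \<Inter> S' = {}"
    define S where "S = P ` S'"
    have SR: "S \<subseteq> R" using S' PA unfolding S_def G_def by auto
    have shS: "shrinking S" unfolding shrinking_def
    proof (intro ballI)
      fix A B assume "A \<in> S" "B \<in> S"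
      then obtain a b where ab: "a \<in> S'" "b \<in> S'" "A = P a" "B = P b" unfolding S_def by blast
      then obtain c where c: "c \<in> S'" "c \<subseteq> a \<inter> b" using S' unfolding shrinking_def by blast
      have "P c \<subseteq> A \<inter> B" using Pmono[of c a] Pmono[of c b] c ab by blast
      moreover have "P c \<in> S" using c unfolding S_def by blast
      ultimately show "\<exists>C\<in>S. C \<subseteq> A \<inter> B" by blast
    qed
    have ne: "S' \<noteq> {}" using S' by auto
    have emp: "\<Inter> S = {}"
    proof (rule ccontr)
      assume "\<Inter> S \<noteq> {}"
      then obtain x where x: "x \<in> \<Inter> S" by blast
      obtain b where "b \<in> S'" using ne by blast
      then have "x \<in> X" using x unfolding S_def P_def by blast
      then have "\<pi> x \<in> \<Inter> S'" using x unfolding S_def P_def by blast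
      thus False using S' by blast
    qed
    have lz: "lim_zero_along v S \<mu>" using M3[OF SR shS emp] .
    show "lim_zero_along v S' (image_measure X \<pi> \<mu>)"
      unfolding lim_zero_along_def
    proof (intro allI impI)
      fix e :: real assume "e > 0"
      then obtain B where B: "B \<in> S" "\<forall>A\<in>S. A \<subseteq> B \<longrightarrow> v (\<mu> A) \<le> e"
        using lz unfolding lim_zero_along_def by blast
      then obtain b where b: "b \<in> S'" "B = P b" unfolding S_def by blast
      have "\<forall>a\<in>S'. a \<subseteq> b \<longrightarrow> v (image_measure X \<pi> \<mu> a) \<le> e"
        using B b Pmono nu unfolding S_def by auto
      thus "\<exists>B\<in>S'. \<forall>A\<in>S'. A \<subseteq> B \<longrightarrow> v (image_measure X \<pi> \<mu> A) \<le> e" using b by blast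
    qed
  qed
  show ?thesis
    apply (rule exI[of _ Y], rule exI[of _ G], rule exI[of _ \<pi>])
    using crG openG haus dim quot preR meas G_def by blast
qed

end
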